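(* Let $K\ge 1$ be an integer, let $\Pi_1,\dots,\Pi_K$ be arbitrary probability distributions on $\mathcal{X}^1\times\mathcal{Y}$, let $(q_1,\dots,q_K)$ be a probability vector, let $\alpha\in(0,1)$, and let $n_1,\dots,n_K\ge 0$ be fixed (nonrandom) integers with $n=n_1+\dots+n_K$. Suppose the calibration data $(X_1,Y_1),\dots,(X_n,Y_n)$, with $X_i=(X_i^0,X_i^1)$, are generated independently as follows: for each $k\in[K]$ and each index $i\in\{n_1+\dots+n_{k-1}+1,\dots,n_1+\dots+n_k\}$, $X_i^0=k$ and $(X_i^1,Y_i)\sim\Pi_k$. Suppose the test point $(X_{n+1},Y_{n+1})$, $X_{n+1}=(X^0_{n+1},X^1_{n+1})$, is drawn independently of the calibration data from the distribution $Q$ given by $X^0_{n+1}\sim\textnormal{Multinomial}(q_1,\dots,q_K)$ (i.e. $\mathbb{P}\{X^0_{n+1}=k\}=q_k$) and $(X^1_{n+1},Y_{n+1})\mid X^0_{n+1}=k\ \sim\ \Pi_k$. Let $s:\mathcal{X}\times\mathcal{Y}\to\mathbb{R}$ be any fixed measurable score function, and let $\widehat{C}_n$ be the GWCP prediction set defined in the context. Then \[\mathbb{P}\left\{Y_{n+1}\in\widehat{C}_n(X_{n+1})\right\}\ \ge\ 1-\alpha-\max_{k:\,n_k>0}\{q_k/n_k\}.\]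
   Context: Features are $x=(x^0,x^1)\in\mathcal{X}=[K]\times\mathcal{X}^1$, where $x^0\in[K]=\{1,\dots,K\}$ is the group label. For a probability distribution $\mu$ on $\mathbb{R}\cup\{+\infty\}$ and $\tau\in(0,1]$, $\textnormal{Quantile}_{\tau}(\mu)=\inf\{t\in\mathbb{R}\cup\{+\infty\}:\mu([-\infty,t])\ge\tau\}$; $\delta_s$ denotes the point mass at $s$. Given calibration data, set $s_i=s(X_i,Y_i)$, $n_k=\sum_{i\le n}\mathbf{1}\{X_i^0=k\}$, and $\widehat{P}^{(k)}_{\textnormal{score}}=\frac{1}{n_k}\sum_{i\le n:\,X_i^0=k}\delta_{s_i}$ if $n_k>0$, while $\widehat{P}^{(k)}_{\textnormal{score}}=\delta_{+\infty}$ if $n_k=0$. The group-weighted conformal prediction (GWCP) set is $\widehat{C}_n(x)=\{y\in\mathcal{Y}: s(x,y)\le\widehat{q}\}$ with $\widehat{q}=\textnormal{Quantile}_{1-\alpha}\big(\sum_{k=1}^K q_k\widehat{P}^{(k)}_{\textnormal{score}}\big)$. *)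

theory Defs
  imports "HOL-Probability.Probability"
begin

definition emp_score :: "ereal list \<Rightarrow> ereal pmf" where
  "emp_score xs = (if xs = [] then return_pmf \<infinity> else pmf_of_multiset (mset xs))"

definition quantile :: "real \<Rightarrow> (ereal set \<Rightarrow> real) \<Rightarrow> ereal" where
  "quantile \<tau> \<mu> = Inf {t. t \<noteq> -\<infinity> \<and> \<mu> {..t} \<ge> \<tau>}"

definition group_scores ::
  "(nat \<times> 'x \<Rightarrow> 'y \<Rightarrow> real) \<Rightarrow> (nat \<times> 'x \<times> 'y) list \<Rightarrow> nat \<Rightarrow> ereal list" where
  "group_scores s data k = [ereal (s (k', x) y). (k', x, y) \<leftarrow> data, k' = k]"

definition gwcp_qhat ::
  "(nat \<times> 'x \<Rightarrow> 'y \<Rightarrow> real) \<Rightarrow> nat \<Rightarrow> (nat \<Rightarrow> real) \<Rightarrow> real \<Rightarrow> (nat \<times> 'x \<times> 'y) list \<Rightarrow> ereal" where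
  "gwcp_qhat s K q \<alpha> data =
     quantile (1 - \<alpha>)
       (\<lambda>A. \<Sum>k\<in>{1..K}. q k * measure_pmf.prob (emp_score (group_scores s data k)) A)"

definition gwcp_set ::
  "(nat \<times> 'x \<Rightarrow> 'y \<Rightarrow> real) \<Rightarrow> nat \<Rightarrow> (nat \<Rightarrow> real) \<Rightarrow> real \<Rightarrow> (nat \<times> 'x \<times> 'y) list
     \<Rightarrow> nat \<times> 'x \<Rightarrow> 'y set" where
  "gwcp_set s K q \<alpha> data x = {y. ereal (s x y) \<le> gwcp_qhat s K q \<alpha> data}"

end

theory Submission
  imports Defs
begin

locale gw =
  fixes K :: nat and q :: "nat \<Rightarrow> real" and \<alpha> :: real and nn :: "nat \<Rightarrow> nat"
    and G :: "nat \<Rightarrow> nat set" and n :: nat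
  assumes q_nonneg: "\<And>k. k \<in> {1..K} \<Longrightarrow> q k \<ge> 0"
    and q_sum: "(\<Sum>k\<in>{1..K}. q k) = 1"
    and alpha: "0 < \<alpha>" "\<alpha> < 1"
    and G_fin: "\<And>k. finite (G k)"
    and G_card: "\<And>k. k \<in> {1..K} \<Longrightarrow> card (G k) = nn k"
    and G_disj: "\<And>k k'. k \<in> {1..K} \<Longrightarrow> k' \<in> {1..K} \<Longrightarrow> k \<noteq> k' \<Longrightarrow> G k \<inter> G k' = {}"
    and G_sub: "\<And>k. k \<in> {1..K} \<Longrightarrow> G k \<subseteq> {1..n}"
    and G_cover: "\<And>i. i \<in> {1..n} \<Longrightarrow> \<exists>k\<in>{1..K}. i \<in> G k"
begin

definition cnt :: "nat set \<Rightarrow> (nat \<Rightarrow> real) \<Rightarrow> ereal \<Rightarrow> nat" where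
  "cnt A c t = card {i\<in>A. ereal (c i) \<le> t}"

definition phi :: "nat \<Rightarrow> (nat \<Rightarrow> real) \<Rightarrow> ereal \<Rightarrow> real" where
  "phi k c t = (if nn k = 0 then (if t = \<infinity> then 1 else 0) else real (cnt (G k) c t) / real (nn k))"

definition Fc :: "(nat \<Rightarrow> real) \<Rightarrow> ereal \<Rightarrow> real" where
  "Fc c t = (\<Sum>k\<in>{1..K}. q k * phi k c t)"

definition Tq :: "(nat \<Rightarrow> real) \<Rightarrow> ereal" where
  "Tq c = Inf {t. t \<noteq> -\<infinity> \<and> 1 - \<alpha> \<le> Fc c t}"

definition cov :: "(nat \<Rightarrow> real) \<Rightarrow> real \<Rightarrow> bool" where
  "cov c z = (ereal z \<le> Tq c)"

lemma cnt_sum: "finite A \<Longrightarrow> real (cnt A c t) = (\<Sum>j\<in>A. if ereal (c j) \<le> t then 1 else 0)"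
  unfolding cnt_def by (simp add: sum.inter_filter[symmetric])

lemma cnt_le: "finite A \<Longrightarrow> cnt A c t \<le> card A"
  unfolding cnt_def by (rule card_mono) auto

lemma cnt_mono: "finite A \<Longrightarrow> t \<le> t' \<Longrightarrow> cnt A c t \<le> cnt A c t'"
  unfolding cnt_def by (rule card_mono) auto

lemma cnt_top: "cnt A c \<infinity> = card A"
  unfolding cnt_def by simp

lemma phi_nonneg: "phi k c t \<ge> 0"
  unfolding phi_def by auto

lemma phi_mono: "k \<in> {1..K} \<Longrightarrow> t \<le> t' \<Longrightarrow> phi k c t \<le> phi k c t'"
  unfolding phi_def using cnt_mono[OF G_fin, of t t' k c]
  by (auto simp: divide_right_mono)

lemma phi_top: "k \<in> {1..K} \<Longrightarrow> phi k c \<infinity> = 1"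
  unfolding phi_def using G_card[of k] by (simp add: cnt_top)

lemma Fc_mono: "t \<le> t' \<Longrightarrow> Fc c t \<le> Fc c t'"
  unfolding Fc_def by (intro sum_mono mult_left_mono phi_mono q_nonneg) auto

lemma Fc_top: "Fc c \<infinity> = 1"
  unfolding Fc_def using q_sum by (simp add: phi_top)

lemma phi_cong: "k \<in> {1..K} \<Longrightarrow> (\<And>i. i \<in> {1..n} \<Longrightarrow> c i = c' i) \<Longrightarrow> phi k c t = phi k c' t"
proof -
  assume k: "k \<in> {1..K}" and e: "\<And>i. i \<in> {1..n} \<Longrightarrow> c i = c' i"
  have "{i\<in>G k. ereal (c i) \<le> t} = {i\<in>G k. ereal (c' i) \<le> t}"
    using G_sub[OF k] e by auto
  then show ?thesis unfolding phi_def cnt_def by simp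
qed

lemma Fc_cong: "(\<And>i. i \<in> {1..n} \<Longrightarrow> c i = c' i) \<Longrightarrow> Fc c t = Fc c' t"
  unfolding Fc_def by (intro sum.cong refl arg_cong2[where f="(*)"] phi_cong) auto

lemma Tq_cong: "(\<And>i. i \<in> {1..n} \<Longrightarrow> c i = c' i) \<Longrightarrow> Tq c = Tq c'"
proof -
  assume e: "\<And>i. i \<in> {1..n} \<Longrightarrow> c i = c' i"
  have "\<And>t. Fc c t = Fc c' t" using Fc_cong e by blast
  then show ?thesis by (simp add: Tq_def)
qed

lemma Fc_below: "t \<noteq> \<infinity> \<Longrightarrow> (\<And>j. j \<in> {1..n} \<Longrightarrow> \<not> ereal (c j) \<le> t) \<Longrightarrow> Fc c t = 0"
proof -
  assume t: "t \<noteq> \<infinity>" and nj: "\<And>j. j \<in> {1..n} \<Longrightarrow> \<not> ereal (c j) \<le> t"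
  have "phi k c t = 0" if k: "k \<in> {1..K}" for k
  proof -
    have "{i\<in>G k. ereal (c i) \<le> t} = {}" using G_sub[OF k] nj by auto
    then have "cnt (G k) c t = 0" unfolding cnt_def by (metis card.empty)
    then show ?thesis unfolding phi_def using t by simp
  qed
  then show ?thesis unfolding Fc_def by simp
qed

lemma Fc_at_max:
  assumes t: "t \<noteq> \<infinity>" and j: "j \<in> {1..n}" and cj: "ereal (c j) \<le> t"
    and mx: "\<And>i. i \<in> {1..n} \<Longrightarrow> ereal (c i) \<le> t \<Longrightarrow> c i \<le> c j"
  shows "Fc c (ereal (c j)) = Fc c t"
proof -
  have "phi k c (ereal (c j)) = phi k c t" if k: "k \<in> {1..K}" for k
  proof -
    have "{i\<in>G k. ereal (c i) \<le> ereal (c j)} = {i\<in>G k. ereal (c i) \<le> t}"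
    proof (rule Collect_cong)
      fix i
      show "(i \<in> G k \<and> ereal (c i) \<le> ereal (c j)) = (i \<in> G k \<and> ereal (c i) \<le> t)"
      proof
        assume "i \<in> G k \<and> ereal (c i) \<le> ereal (c j)"
        then show "i \<in> G k \<and> ereal (c i) \<le> t" using cj by (meson order_trans)
      next
        assume a: "i \<in> G k \<and> ereal (c i) \<le> t"
        then have "i \<in> {1..n}" using G_sub[OF k] by blast
        then show "i \<in> G k \<and> ereal (c i) \<le> ereal (c j)" using a mx by simp
      qed
    qed
    then show ?thesis unfolding phi_def cnt_def using t by simp
  qed
  then show ?thesis unfolding Fc_def by simp
qed

lemma exists_max:
  assumes t: "t \<noteq> \<infinity>" "t \<noteq> -\<infinity>" and F: "1 - \<alpha> \<le> Fc c t"
  obtains j where "j \<in> {1..n}" "ereal (c j) \<le> t" "Fc c (ereal (c j)) = Fc c t"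
proof -
  let ?J = "{j\<in>{1..n}. ereal (c j) \<le> t}"
  have ne: "?J \<noteq> {}"
  proof
    assume "?J = {}"
    then have "Fc c t = 0" using Fc_below[OF t(1)] by auto
    with F alpha show False by simp
  qed
  have fin: "finite (c ` ?J)" by simp
  have "Max (c ` ?J) \<in> c ` ?J" using ne fin by (intro Max_in) auto
  then obtain j where j: "j \<in> ?J" "c j = Max (c ` ?J)" by auto
  have "c i \<le> c j" if "i \<in> {1..n}" "ereal (c i) \<le> t" for i
    using that j(2) fin by (auto intro!: Max_ge)
  then have "Fc c (ereal (c j)) = Fc c t" using Fc_at_max[OF t(1), of j c] j by auto
  with j that show ?thesis by auto
qed

lemma Tq_props: "1 - \<alpha> \<le> Fc c (Tq c) \<and> Tq c \<noteq> -\<infinity>"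
proof -
  let ?S = "{t. t \<noteq> -\<infinity> \<and> 1 - \<alpha> \<le> Fc c t}"
  let ?A = "{t\<in>insert \<infinity> ((\<lambda>j. ereal (c j)) ` {1..n}). 1 - \<alpha> \<le> Fc c t}"
  have finA: "finite ?A" by simp
  have neA: "?A \<noteq> {}" using Fc_top alpha by auto
  define m where "m = Min ?A"
  have mA: "m \<in> ?A" unfolding m_def using finA neA by (rule Min_in)
  have mS: "m \<in> ?S" using mA by auto
  have "m \<le> t" if tS: "t \<in> ?S" for t
  proof (cases "t = \<infinity>")
    case True then show ?thesis by simp
  next
    case False
    from tS have "t \<noteq> -\<infinity>" "1 - \<alpha> \<le> Fc c t" by auto
    then obtain j where j: "j \<in> {1..n}" "ereal (c j) \<le> t" "Fc c (ereal (c j)) = Fc c t"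
      using exists_max False by blast
    then have "ereal (c j) \<in> ?A" using \<open>1 - \<alpha> \<le> Fc c t\<close> by auto
    then have "m \<le> ereal (c j)" unfolding m_def by (rule Min_le[OF finA])
    then show ?thesis using j(2) by simp
  qed
  then have "Tq c = m" unfolding Tq_def using mS
    by (intro antisym Inf_lower Inf_greatest) auto
  then show ?thesis using mS by auto
qed

lemma Tq_le: "t \<noteq> -\<infinity> \<Longrightarrow> 1 - \<alpha> \<le> Fc c t \<Longrightarrow> Tq c \<le> t"
  unfolding Tq_def by (rule Inf_lower) auto

lemma cov_iff: "cov c z \<longleftrightarrow> (\<forall>j\<in>{1..n}. c j < z \<longrightarrow> Fc c (ereal (c j)) < 1 - \<alpha>)"
proof
  assume cv: "cov c z"
  show "\<forall>j\<in>{1..n}. c j < z \<longrightarrow> Fc c (ereal (c j)) < 1 - \<alpha>"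
  proof (intro ballI impI)
    fix j assume "j \<in> {1..n}" "c j < z"
    show "Fc c (ereal (c j)) < 1 - \<alpha>"
    proof (rule ccontr)
      assume "\<not> Fc c (ereal (c j)) < 1 - \<alpha>"
      then have "Tq c \<le> ereal (c j)" by (intro Tq_le) auto
      moreover have "ereal z \<le> Tq c" using cv unfolding cov_def .
      ultimately have "ereal z \<le> ereal (c j)" by (rule order_trans[rotated])
      with \<open>c j < z\<close> show False by simp
    qed
  qed
next
  assume H: "\<forall>j\<in>{1..n}. c j < z \<longrightarrow> Fc c (ereal (c j)) < 1 - \<alpha>"
  show "cov c z"
  proof (rule ccontr)
    assume "\<not> cov c z"
    then have lt: "Tq c < ereal z" unfolding cov_def by simp
    have "Tq c \<noteq> \<infinity>" using lt by auto
    moreover have "Tq c \<noteq> -\<infinity>" "1 - \<alpha> \<le> Fc c (Tq c)" using Tq_props by auto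
    ultimately obtain j where j: "j \<in> {1..n}" "ereal (c j) \<le> Tq c" "Fc c (ereal (c j)) = Fc c (Tq c)"
      using exists_max by blast
    have "ereal (c j) < ereal z" using j(2) lt by (rule le_less_trans)
    then have "c j < z" by simp
    with H j(1) have "Fc c (ereal (c j)) < 1 - \<alpha>" by blast
    with j(3) \<open>1 - \<alpha> \<le> Fc c (Tq c)\<close> show False by linarith
  qed
qed

lemma Fc_real: "Fc c (ereal r) = (\<Sum>k\<in>{1..K}. if nn k = 0 then 0 else q k / real (nn k) *
      (\<Sum>i\<in>G k. if c i \<le> r then 1 else 0))"
  unfolding Fc_def phi_def by (intro sum.cong refl) (simp add: cnt_sum[OF G_fin])

lemma Fc_update:
  assumes k: "k \<in> {1..K}" and nk: "nn k > 0" and j: "j \<in> G k"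
  shows "Fc c t = Fc (c(j:=w)) t + q k / real (nn k) *
     ((if ereal (c j) \<le> t then 1 else 0) - (if ereal w \<le> t then 1 else 0))"
proof -
  let ?c' = "c(j:=w)"
  have other: "phi k' c t = phi k' ?c' t" if "k' \<in> {1..K} - {k}" for k'
  proof -
    have "j \<notin> G k'" using G_disj[of k k'] that k j by auto
    then have "{i\<in>G k'. ereal (c i) \<le> t} = {i\<in>G k'. ereal (?c' i) \<le> t}" by auto
    then show ?thesis unfolding phi_def cnt_def by simp
  qed
  have s0: "(\<Sum>i\<in>G k - {j}. if ereal (?c' i) \<le> t then 1 else 0) =
      (\<Sum>i\<in>G k - {j}. if ereal (c i) \<le> t then (1::real) else 0)"
    by (rule sum.cong) auto
  have s1: "real (cnt (G k) c t) = (if ereal (c j) \<le> t then 1 else 0) +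
      (\<Sum>i\<in>G k - {j}. if ereal (c i) \<le> t then 1 else 0)"
    by (simp add: cnt_sum[OF G_fin] sum.remove[OF G_fin j])
  have s2: "real (cnt (G k) ?c' t) = (if ereal w \<le> t then 1 else 0) +
      (\<Sum>i\<in>G k - {j}. if ereal (c i) \<le> t then 1 else 0)"
    using s0 by (simp add: cnt_sum[OF G_fin] sum.remove[OF G_fin j])
  have pk: "q k * phi k c t = q k * phi k ?c' t + q k / real (nn k) *
     ((if ereal (c j) \<le> t then 1 else 0) - (if ereal w \<le> t then 1 else 0))"
    using nk s1 s2 unfolding phi_def by (simp add: field_simps)
  have kK: "k \<in> {1..K}" by fact
  have "Fc c t = q k * phi k c t + (\<Sum>k'\<in>{1..K}-{k}. q k' * phi k' c t)"
    unfolding Fc_def using kK by (intro sum.remove) auto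
  moreover have "Fc ?c' t = q k * phi k ?c' t + (\<Sum>k'\<in>{1..K}-{k}. q k' * phi k' ?c' t)"
    unfolding Fc_def using kK by (intro sum.remove) auto
  moreover have "(\<Sum>k'\<in>{1..K}-{k}. q k' * phi k' c t) = (\<Sum>k'\<in>{1..K}-{k}. q k' * phi k' ?c' t)"
    using other by (intro sum.cong) auto
  ultimately show ?thesis using pk by simp
qed

definition ek :: "(nat \<Rightarrow> real) \<Rightarrow> nat \<Rightarrow> bool" where
  "ek c k = (\<exists>t. t \<noteq> -\<infinity> \<and> t < Tq c \<and> 1 - \<alpha> - q k / real (nn k) \<le> Fc c t)"

definition ell :: "(nat \<Rightarrow> real) \<Rightarrow> nat \<Rightarrow> nat \<Rightarrow> real" where
  "ell c k j = (if ereal (c j) \<le> Tq c \<and> \<not> (ereal (c j) = Tq c \<and> ek c k) then 1 else 0)"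

lemma keyA:
  assumes k: "k \<in> {1..K}" "nn k > 0" and j: "j \<in> G k"
    and le: "ereal (c j) \<le> Tq c" and nc: "\<not> cov (c(j:=w)) (c j)"
  shows "ereal (c j) = Tq c \<and> ek c k"
proof -
  let ?c' = "c(j:=w)"
  define T' where "T' = Tq ?c'"
  have T'lt: "T' < ereal (c j)" using nc unfolding cov_def T'_def by simp
  have F': "1 - \<alpha> \<le> Fc ?c' T'" "T' \<noteq> -\<infinity>" using Tq_props unfolding T'_def by auto
  have qn: "q k / real (nn k) \<ge> 0" using q_nonneg[OF k(1)] by simp
  have upd: "Fc c T' = Fc ?c' T' + q k / real (nn k) *
     ((if ereal (c j) \<le> T' then 1 else 0) - (if ereal w \<le> T' then 1 else 0))"
    by (rule Fc_update[OF k j])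
  have "1 - \<alpha> - q k / real (nn k) \<le> Fc c T'"
    using upd T'lt F'(1) qn by (auto split: if_splits)
  moreover have T'T: "T' < Tq c" using T'lt le by (rule less_le_trans)
  ultimately have E: "ek c k" unfolding ek_def using F'(2) by blast
  have eq: "ereal (c j) = Tq c"
  proof (rule ccontr)
    assume "ereal (c j) \<noteq> Tq c"
    with le have lt: "ereal (c j) < Tq c" by simp
    have m1: "Fc ?c' T' \<le> Fc ?c' (ereal (c j))" using T'lt by (intro Fc_mono) simp
    have upd2: "Fc c (ereal (c j)) = Fc ?c' (ereal (c j)) + q k / real (nn k) *
       ((if ereal (c j) \<le> ereal (c j) then 1 else 0) - (if ereal w \<le> ereal (c j) then 1 else 0))"
      by (rule Fc_update[OF k j])
    have "Fc ?c' (ereal (c j)) \<le> Fc c (ereal (c j))"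
      using upd2 qn by (auto split: if_splits)
    then have "1 - \<alpha> \<le> Fc c (ereal (c j))" using m1 F'(1) by linarith
    then have "Tq c \<le> ereal (c j)" by (intro Tq_le) auto
    with lt show False by simp
  qed
  show ?thesis using eq E by simp
qed

lemma ell_le:
  assumes k: "k \<in> {1..K}" "nn k > 0" and j: "j \<in> G k"
  shows "ell c k j \<le> (if cov (c(j:=w)) (c j) then 1 else 0)"
  using keyA[OF k j, of c w] unfolding ell_def by auto

lemma ell_nonneg: "0 \<le> ell c k j"
  unfolding ell_def by simp

lemma combine:
  assumes m0: "0 \<le> m" and mk: "\<And>k. k \<in> {1..K} \<Longrightarrow> nn k > 0 \<Longrightarrow> q k / real (nn k) \<le> m"
  shows "1 - \<alpha> - m \<le> (\<Sum>k\<in>{1..K}. if nn k = 0 then q k * (if Tq c = \<infinity> then 1 else 0)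
            else (\<Sum>j\<in>G k. q k / real (nn k) * ell c k j))"
proof (cases "\<exists>k\<in>{1..K}. nn k > 0 \<and> ek c k")
  case False
  have "(if nn k = 0 then q k * (if Tq c = \<infinity> then 1 else 0)
            else (\<Sum>j\<in>G k. q k / real (nn k) * ell c k j)) = q k * phi k c (Tq c)"
    if k: "k \<in> {1..K}" for k
  proof (cases "nn k = 0")
    case True then show ?thesis unfolding phi_def by simp
  next
    case nz: False
    have "\<not> (nn k > 0 \<and> ek c k)" using False k by blast
    then have "\<not> ek c k" using nz by simp
    then have "(\<Sum>j\<in>G k. q k / real (nn k) * ell c k j) =
        q k / real (nn k) * (\<Sum>j\<in>G k. if ereal (c j) \<le> Tq c then 1 else 0)"
      unfolding ell_def by (simp add: sum_distrib_left)
    also have "\<dots> = q k * phi k c (Tq c)"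
      using nz unfolding phi_def by (simp add: cnt_sum[OF G_fin])
    finally show ?thesis using nz by simp
  qed
  then have "(\<Sum>k\<in>{1..K}. if nn k = 0 then q k * (if Tq c = \<infinity> then 1 else 0)
            else (\<Sum>j\<in>G k. q k / real (nn k) * ell c k j)) = Fc c (Tq c)"
    unfolding Fc_def by (intro sum.cong) auto
  then show ?thesis using Tq_props[of c] m0 by simp
next
  case True
  then obtain k0 where k0: "k0 \<in> {1..K}" "nn k0 > 0" "ek c k0" by blast
  then obtain t where t: "t \<noteq> -\<infinity>" "t < Tq c" "1 - \<alpha> - q k0 / real (nn k0) \<le> Fc c t"
    unfolding ek_def by blast
  have "q k * phi k c t \<le> (if nn k = 0 then q k * (if Tq c = \<infinity> then 1 else 0)
            else (\<Sum>j\<in>G k. q k / real (nn k) * ell c k j))"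
    if k: "k \<in> {1..K}" for k
  proof (cases "nn k = 0")
    case True
    have "t \<noteq> \<infinity>" using t(2) by auto
    then show ?thesis using True q_nonneg[OF k] unfolding phi_def by simp
  next
    case nz: False
    have "ell c k j \<ge> (if ereal (c j) \<le> t then 1 else 0)" for j
    proof -
      have "ereal (c j) \<le> t \<Longrightarrow> ereal (c j) < Tq c" using t(2) by (blast intro: le_less_trans)
      then show ?thesis unfolding ell_def by auto
    qed
    then have "(\<Sum>j\<in>G k. q k / real (nn k) * (if ereal (c j) \<le> t then 1 else 0)) \<le>
        (\<Sum>j\<in>G k. q k / real (nn k) * ell c k j)"
      using q_nonneg[OF k] by (intro sum_mono mult_left_mono) auto
    moreover have "(\<Sum>j\<in>G k. q k / real (nn k) * (if ereal (c j) \<le> t then 1 else 0)) =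
        q k / real (nn k) * (\<Sum>j\<in>G k. if ereal (c j) \<le> t then 1 else 0)"
      by (simp add: sum_distrib_left)
    moreover have "\<dots> = q k * phi k c t"
      using nz unfolding phi_def by (simp add: cnt_sum[OF G_fin])
    ultimately show ?thesis using nz by simp
  qed
  then have "Fc c t \<le> (\<Sum>k\<in>{1..K}. if nn k = 0 then q k * (if Tq c = \<infinity> then 1 else 0)
            else (\<Sum>j\<in>G k. q k / real (nn k) * ell c k j))"
    unfolding Fc_def by (intro sum_mono) auto
  moreover have "q k0 / real (nn k0) \<le> m" using mk k0 by auto
  ultimately show ?thesis using t(3) by linarith
qed

end

lemma prob_pmf_of_mset_list:
  assumes "xs \<noteq> []"
  shows "measure_pmf.prob (pmf_of_multiset (mset xs)) A = real (length (filter (\<lambda>x. x \<in> A) xs)) / real (length xs)"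
proof -
  have ne: "mset xs \<noteq> {#}" using assms by simp
  have sp: "set_pmf (pmf_of_multiset (mset xs)) = set xs" using ne by simp
  have "measure_pmf.prob (pmf_of_multiset (mset xs)) A = measure_pmf.prob (pmf_of_multiset (mset xs)) (A \<inter> set xs)"
    using measure_Int_set_pmf[of "pmf_of_multiset (mset xs)" A] sp by simp
  also have "\<dots> = (\<Sum>x\<in>A \<inter> set xs. real (count (mset xs) x) / real (size (mset xs)))"
    using ne by (simp add: measure_measure_pmf_finite)
  also have "\<dots> = real (\<Sum>x\<in>A \<inter> set xs. count (mset xs) x) / real (length xs)"
    by (simp add: sum_divide_distrib)
  also have "(\<Sum>x\<in>A \<inter> set xs. count (mset xs) x) = size (filter_mset (\<lambda>x. x \<in> A) (mset xs))"
    by (subst size_multiset_overloaded_eq) (auto intro!: sum.cong)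
  also have "\<dots> = length (filter (\<lambda>x. x \<in> A) xs)"
    by (metis mset_filter size_mset)
  finally show ?thesis .
qed

lemma group_scores_map:
  "group_scores s (map F xs) k =
     map (\<lambda>i. ereal (s (fst (F i), fst (snd (F i))) (snd (snd (F i))))) (filter (\<lambda>i. fst (F i) = k) xs)"
  unfolding group_scores_def
  by (induction xs) (auto split: prod.splits)

lemma partition_facts:
  fixes nn :: "nat \<Rightarrow> nat" and K :: nat and G :: "nat \<Rightarrow> nat set"
  assumes G_def: "G = (\<lambda>k. {i. (\<Sum>j\<in>{1..<k}. nn j) < i \<and> i \<le> (\<Sum>j\<in>{1..k}. nn j)})"
  shows "\<And>k. finite (G k)"
    and "\<And>k. k \<in> {1..K} \<Longrightarrow> card (G k) = nn k"
    and "\<And>k k'. k \<in> {1..K} \<Longrightarrow> k' \<in> {1..K} \<Longrightarrow> k \<noteq> k' \<Longrightarrow> G k \<inter> G k' = {}"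
    and "\<And>k. k \<in> {1..K} \<Longrightarrow> G k \<subseteq> {1..(\<Sum>k\<in>{1..K}. nn k)}"
    and "\<And>i. i \<in> {1..(\<Sum>k\<in>{1..K}. nn k)} \<Longrightarrow> \<exists>k\<in>{1..K}. i \<in> G k"
proof -
  have Geq: "G k = {(\<Sum>j\<in>{1..<k}. nn j)<..(\<Sum>j\<in>{1..k}. nn j)}" for k
    unfolding G_def by auto
  show fin: "finite (G k)" for k unfolding Geq by simp
  have split: "(\<Sum>j\<in>{1..k}. nn j) = (\<Sum>j\<in>{1..<k}. nn j) + nn k" if "k \<ge> 1" for k
  proof -
    have "{1..k} = insert k {1..<k}" using that by auto
    then show ?thesis by simp
  qed
  show "card (G k) = nn k" if "k \<in> {1..K}" for k
    unfolding Geq using split[of k] that by simp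
  have mono: "(\<Sum>j\<in>{1..k}. nn j) \<le> (\<Sum>j\<in>{1..<k'}. nn j)" if "k < k'" for k k'
    using that by (intro sum_mono2) auto
  show "G k \<inter> G k' = {}" if "k \<in> {1..K}" "k' \<in> {1..K}" "k \<noteq> k'" for k k'
  proof (cases "k < k'")
    case True with mono[OF True] show ?thesis unfolding Geq by auto
  next
    case False then have "k' < k" using that by simp
    with mono[OF this] show ?thesis unfolding Geq by auto
  qed
  show "G k \<subseteq> {1..(\<Sum>k\<in>{1..K}. nn k)}" if "k \<in> {1..K}" for k
  proof -
    have "(\<Sum>j\<in>{1..k}. nn j) \<le> (\<Sum>j\<in>{1..K}. nn j)" using that by (intro sum_mono2) auto
    then show ?thesis unfolding Geq by auto
  qed
  show "\<exists>k\<in>{1..K}. i \<in> G k" if i: "i \<in> {1..(\<Sum>k\<in>{1..K}. nn k)}" for i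
  proof -
    define P where "P = (\<lambda>k. i \<le> (\<Sum>j\<in>{1..k}. nn j))"
    have PK: "P K" using i unfolding P_def by auto
    define k where "k = (LEAST k. P k)"
    have Pk: "P k" unfolding k_def using PK by (rule LeastI)
    have kK: "k \<le> K" unfolding k_def using PK by (rule Least_le)
    have k1: "k \<ge> 1"
    proof (rule ccontr)
      assume "\<not> k \<ge> 1" then have "k = 0" by simp
      with Pk i show False unfolding P_def by simp
    qed
    have "\<not> P (k - 1)"
    proof
      assume "P (k - 1)"
      then have "k \<le> k - 1" unfolding k_def by (rule Least_le)
      with k1 show False by simp
    qed
    moreover have "{1..<k} = {1..k-1}" using k1 by auto
    ultimately have "(\<Sum>j\<in>{1..<k}. nn j) < i" unfolding P_def by simp
    with Pk have "i \<in> G k" unfolding G_def P_def by simp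
    with k1 kK show ?thesis by auto
  qed
qed

lemma swap_lemma:
  fixes E :: "nat \<Rightarrow> 'a measure" and R :: "'a measure"
  assumes prob: "\<And>i. prob_space (E i)"
    and J: "finite J" "j \<in> J" and Ej: "E j = R"
    and h: "h \<in> borel_measurable (PiM J E \<Otimes>\<^sub>M R)"
  shows "(\<integral>\<^sup>+x. \<integral>\<^sup>+y. h (x, y) \<partial>R \<partial>PiM J E) = (\<integral>\<^sup>+x. \<integral>\<^sup>+y. h (x(j := y), x j) \<partial>R \<partial>PiM J E)"
proof -
  have sf: "\<And>i. sigma_finite_measure (E i)" using prob by (rule prob_space_imp_sigma_finite)
  interpret product_sigma_finite E using sf by (rule product_sigma_finite.intro)
  have Rp: "prob_space R" using prob[of j] Ej by simp
  interpret R: prob_space R by (rule Rp)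
  have Rs: "sigma_finite_measure R" using Rp by (rule prob_space_imp_sigma_finite)
  interpret RR: pair_sigma_finite R R using Rs Rs by (rule pair_sigma_finite.intro)
  define J' where "J' = J - {j}"
  have JJ: "J = insert j J'" "j \<notin> J'" "finite J'" using J unfolding J'_def by auto
  have hm[measurable]: "h \<in> borel_measurable (PiM (insert j J') E \<Otimes>\<^sub>M R)" using h JJ by simp
  have upd[measurable]: "(\<lambda>(x, y). x(j := y)) \<in> measurable (PiM J E \<Otimes>\<^sub>M R) (PiM J E)"
  proof (rule measurable_PiM_single')
    fix i assume i: "i \<in> J"
    show "(\<lambda>\<omega>. (case \<omega> of (x, y) \<Rightarrow> x(j := y)) i) \<in> measurable (PiM J E \<Otimes>\<^sub>M R) (E i)"
    proof (cases "i = j")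
      case True
      then show ?thesis using Ej by (simp add: case_prod_beta)
    next
      case False
      then have eq: "(\<lambda>\<omega>. (case \<omega> of (x, y) \<Rightarrow> x(j := y)) i) = (\<lambda>\<omega>. fst \<omega> i)" by (auto simp: fun_eq_iff)
      show ?thesis unfolding eq using i by measurable
    qed
  next
    show "(\<lambda>\<omega>. case \<omega> of (x, y) \<Rightarrow> x(j := y)) \<in> space (PiM J E \<Otimes>\<^sub>M R) \<rightarrow> (\<Pi>\<^sub>E i\<in>J. space (E i))"
      using J Ej by (auto simp: space_pair_measure space_PiM PiE_iff extensional_def)
  qed
  have h2: "(\<lambda>p. h ((fst p)(j := snd p), fst p j)) \<in> borel_measurable (PiM J E \<Otimes>\<^sub>M R)"
  proof -
    have a: "(\<lambda>p. (fst p)(j := snd p)) \<in> measurable (PiM J E \<Otimes>\<^sub>M R) (PiM J E)"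
      using upd by (simp add: case_prod_beta')
    have b0: "(\<lambda>p. fst p j) \<in> measurable (PiM J E \<Otimes>\<^sub>M R) (E j)"
      using J by measurable
    then have b: "(\<lambda>p. fst p j) \<in> measurable (PiM J E \<Otimes>\<^sub>M R) R"
      using Ej by simp
    show ?thesis using measurable_compose[OF measurable_Pair[OF a b] h] by (simp add: comp_def)
  qed
  have f1: "(\<lambda>x. \<integral>\<^sup>+y. h (x, y) \<partial>R) \<in> borel_measurable (PiM (insert j J') E)"
    using R.borel_measurable_nn_integral[of "\<lambda>x y. h (x, y)"] hm by simp
  have f2: "(\<lambda>x. \<integral>\<^sup>+y. h (x(j := y), x j) \<partial>R) \<in> borel_measurable (PiM (insert j J') E)"
    using R.borel_measurable_nn_integral[of "\<lambda>x y. h (x(j := y), x j)"] h2 JJ by (simp add: case_prod_beta')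
  have L: "(\<integral>\<^sup>+x. \<integral>\<^sup>+y. h (x, y) \<partial>R \<partial>PiM J E) =
     (\<integral>\<^sup>+x. \<integral>\<^sup>+u. \<integral>\<^sup>+y. h (x(j := u), y) \<partial>R \<partial>E j \<partial>PiM J' E)"
    using product_nn_integral_insert[OF JJ(3) JJ(2) f1] JJ(1) by simp
  have Rr: "(\<integral>\<^sup>+x. \<integral>\<^sup>+y. h (x(j := y), x j) \<partial>R \<partial>PiM J E) =
     (\<integral>\<^sup>+x. \<integral>\<^sup>+u. \<integral>\<^sup>+y. h (x(j := y), u) \<partial>R \<partial>E j \<partial>PiM J' E)"
    using product_nn_integral_insert[OF JJ(3) JJ(2) f2] JJ(1) by simp
  have inner: "(\<integral>\<^sup>+u. \<integral>\<^sup>+y. h (x(j := u), y) \<partial>R \<partial>E j) = (\<integral>\<^sup>+u. \<integral>\<^sup>+y. h (x(j := y), u) \<partial>R \<partial>E j)"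
    if x: "x \<in> space (PiM J' E)" for x
  proof -
    have xu: "(\<lambda>u. x(j := u)) \<in> measurable R (PiM J E)"
      using measurable_component_update[OF x JJ(2)] JJ(1) Ej by simp
    have g: "(\<lambda>(u, y). h (x(j := u), y)) \<in> borel_measurable (R \<Otimes>\<^sub>M R)"
    proof -
      have "(\<lambda>p. (x(j := fst p), snd p)) \<in> measurable (R \<Otimes>\<^sub>M R) (PiM J E \<Otimes>\<^sub>M R)"
        using xu by measurable
      from measurable_compose[OF this h] show ?thesis by (simp add: comp_def case_prod_beta')
    qed
    have "(\<integral>\<^sup>+u. \<integral>\<^sup>+y. h (x(j := u), y) \<partial>R \<partial>R) = (\<integral>\<^sup>+y. \<integral>\<^sup>+u. h (x(j := u), y) \<partial>R \<partial>R)"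
      using RR.Fubini'[OF g] by simp
    then show ?thesis using Ej by simp
  qed
  show ?thesis unfolding L Rr by (intro nn_integral_cong inner) simp
qed

lemma (in gw) cov_measurable:
  assumes a: "\<And>i. i \<in> {1..n} \<Longrightarrow> (\<lambda>\<omega>. a \<omega> i) \<in> borel_measurable N"
    and b: "b \<in> borel_measurable N"
  shows "Measurable.pred N (\<lambda>\<omega>. cov (a \<omega>) (b \<omega>))"
proof -
  have eq: "(\<lambda>\<omega>. cov (a \<omega>) (b \<omega>)) = (\<lambda>\<omega>. \<forall>j\<in>{1..n}. a \<omega> j < b \<omega> \<longrightarrow>
     (\<Sum>k\<in>{1..K}. if nn k = 0 then 0 else q k / real (nn k) *
        (\<Sum>i\<in>G k. if a \<omega> i \<le> a \<omega> j then 1 else 0)) < 1 - \<alpha>)"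
    by (simp add: cov_iff Fc_real)
  show ?thesis unfolding eq
  proof (rule pred_intros_finite(3))
    fix j assume j: "j \<in> {1..n}"
    note [measurable] = a[OF j] b
    have ind: "(\<lambda>\<omega>. if a \<omega> i \<le> a \<omega> j then 1 else (0::real)) \<in> borel_measurable N" if i: "i \<in> {1..n}" for i
    proof -
      note [measurable] = a[OF i]
      show ?thesis by measurable
    qed
    have S: "(\<lambda>\<omega>. \<Sum>k\<in>{1..K}. if nn k = 0 then 0 else q k / real (nn k) *
        (\<Sum>i\<in>G k. if a \<omega> i \<le> a \<omega> j then 1 else (0::real))) \<in> borel_measurable N"
    proof (rule borel_measurable_sum)
      fix k assume k: "k \<in> {1..K}"
      have "(\<lambda>\<omega>. \<Sum>i\<in>G k. if a \<omega> i \<le> a \<omega> j then 1 else (0::real)) \<in> borel_measurable N"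
        using G_sub[OF k] by (intro borel_measurable_sum ind) auto
      then show "(\<lambda>\<omega>. if nn k = 0 then 0 else q k / real (nn k) *
        (\<Sum>i\<in>G k. if a \<omega> i \<le> a \<omega> j then 1 else (0::real))) \<in> borel_measurable N"
        by (cases "nn k = 0") auto
    qed
    note [measurable] = S
    show "Measurable.pred N (\<lambda>\<omega>. a \<omega> j < b \<omega> \<longrightarrow>
     (\<Sum>k\<in>{1..K}. if nn k = 0 then 0 else q k / real (nn k) *
        (\<Sum>i\<in>G k. if a \<omega> i \<le> a \<omega> j then 1 else 0)) < 1 - \<alpha>)"
      by measurable
  qed simp
qed

theorem theorem1:
  fixes M :: "'w measure"
    and SX :: "'x measure" and SY :: "'y measure"
    and Pk :: "nat \<Rightarrow> ('x \<times> 'y) measure"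
    and K :: nat and q :: "nat \<Rightarrow> real" and \<alpha> :: real
    and nn :: "nat \<Rightarrow> nat" and n :: nat
    and X0 :: "nat \<Rightarrow> 'w \<Rightarrow> nat" and X1 :: "nat \<Rightarrow> 'w \<Rightarrow> 'x" and Y :: "nat \<Rightarrow> 'w \<Rightarrow> 'y"
    and s :: "nat \<times> 'x \<Rightarrow> 'y \<Rightarrow> real"
  assumes K: "K \<ge> 1"
    and Pi_prob: "\<And>k. k \<in> {1..K} \<Longrightarrow> prob_space (Pk k)"
    and Pi_sets: "\<And>k. k \<in> {1..K} \<Longrightarrow> sets (Pk k) = sets (SX \<Otimes>\<^sub>M SY)"
    and q_nonneg: "\<And>k. k \<in> {1..K} \<Longrightarrow> q k \<ge> 0"
    and q_sum: "(\<Sum>k\<in>{1..K}. q k) = 1"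
    and alpha: "0 < \<alpha>" "\<alpha> < 1"
    and n_def: "n = (\<Sum>k\<in>{1..K}. nn k)"
    and M: "prob_space M"
    and calib: "\<And>k i. k \<in> {1..K} \<Longrightarrow> (\<Sum>j\<in>{1..<k}. nn j) < i \<Longrightarrow> i \<le> (\<Sum>j\<in>{1..k}. nn j) \<Longrightarrow>
                 (\<forall>\<omega>\<in>space M. X0 i \<omega> = k) \<and>
                 distr M (SX \<Otimes>\<^sub>M SY) (\<lambda>\<omega>. (X1 i \<omega>, Y i \<omega>)) = Pk k"
    and test: "\<And>k A. k \<in> {1..K} \<Longrightarrow> A \<in> sets (SX \<Otimes>\<^sub>M SY) \<Longrightarrow>
                 measure M {\<omega> \<in> space M. X0 (n+1) \<omega> = k \<and> (X1 (n+1) \<omega>, Y (n+1) \<omega>) \<in> A}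
                   = q k * measure (Pk k) A"
    and indep: "prob_space.indep_vars M (\<lambda>i. count_space UNIV \<Otimes>\<^sub>M (SX \<Otimes>\<^sub>M SY))
                  (\<lambda>i \<omega>. (X0 i \<omega>, (X1 i \<omega>, Y i \<omega>))) {1..n+1}"
    and s_meas: "(\<lambda>(k, x, y). s (k, x) y) \<in> borel_measurable (count_space UNIV \<Otimes>\<^sub>M (SX \<Otimes>\<^sub>M SY))"
  shows "measure M {\<omega> \<in> space M.
            Y (n+1) \<omega> \<in> gwcp_set s K q \<alpha> (map (\<lambda>i. (X0 i \<omega>, X1 i \<omega>, Y i \<omega>)) [1..<n+1])
                           (X0 (n+1) \<omega>, X1 (n+1) \<omega>)}
         \<ge> 1 - \<alpha> - Max (insert 0 {q k / real (nn k) | k. k \<in> {1..K} \<and> nn k > 0})"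
proof -
  interpret M: prob_space M by (rule M)
  define G where "G = (\<lambda>k. {i. (\<Sum>j\<in>{1..<k}. nn j) < i \<and> i \<le> (\<Sum>j\<in>{1..k}. nn j)})"
  note PF = partition_facts[OF G_def]
  have PF4: "\<And>k. k \<in> {1..K} \<Longrightarrow> G k \<subseteq> {1..n}" using PF(4)[of _ K] n_def by simp
  have PF5: "\<And>i. i \<in> {1..n} \<Longrightarrow> \<exists>k\<in>{1..K}. i \<in> G k" using PF(5)[of _ K] n_def by simp
  interpret gw K q \<alpha> nn G n
    by (rule gw.intro[OF q_nonneg q_sum alpha(1) alpha(2) PF(1) PF(2)[of _ K] PF(3)[of _ K] PF4 PF5]) auto
  have calibG: "(\<forall>\<omega>\<in>space M. X0 i \<omega> = k) \<and> distr M (SX \<Otimes>\<^sub>M SY) (\<lambda>\<omega>. (X1 i \<omega>, Y i \<omega>)) = Pk k"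
    if "k \<in> {1..K}" "i \<in> G k" for k i
    using calib[of k i] that unfolding G_def by auto
  have X0G: "(X0 i \<omega> = k) \<longleftrightarrow> i \<in> G k"
    if i: "i \<in> {1..n}" and w: "\<omega> \<in> space M" and k: "k \<in> {1..K}" for i \<omega> k
  proof -
    obtain k' where k': "k' \<in> {1..K}" "i \<in> G k'" using G_cover[OF i] by blast
    have "X0 i \<omega> = k'" using calibG[OF k'] w by auto
    moreover have "i \<in> G k \<longleftrightarrow> k = k'"
      using G_disj[OF k k'(1)] k'(2) by auto
    ultimately show ?thesis by auto
  qed
  define N where "N = (count_space UNIV \<Otimes>\<^sub>M (SX \<Otimes>\<^sub>M SY) :: (nat \<times> 'x \<times> 'y) measure)"
  define Sp where "Sp = (count_space UNIV \<Otimes>\<^sub>M borel :: (nat \<times> real) measure)"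
  define I where "I = {1..n+1}"
  define hZ :: "nat \<times> 'x \<times> 'y \<Rightarrow> nat \<times> real" where "hZ = (\<lambda>p. (fst p, (\<lambda>(k, x, y). s (k, x) y) p))"
  have hZm: "hZ \<in> measurable N Sp"
    unfolding hZ_def N_def Sp_def by (rule measurable_Pair[OF measurable_fst s_meas])
  have Vm: "(\<lambda>\<omega>. (X0 i \<omega>, X1 i \<omega>, Y i \<omega>)) \<in> measurable M N" if "i \<in> I" for i
    using indep that unfolding M.indep_vars_def N_def I_def by auto
  define Z where "Z = (\<lambda>i \<omega>. hZ (X0 i \<omega>, X1 i \<omega>, Y i \<omega>))"
  have Zm: "Z i \<in> measurable M Sp" if "i \<in> I" for i
    unfolding Z_def by (rule measurable_compose[OF Vm[OF that] hZm])
  have indZ: "M.indep_vars (\<lambda>_. Sp) Z I"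
    unfolding Z_def I_def using M.indep_vars_compose2[OF indep hZm[unfolded N_def]] by simp
  have Ine: "I \<noteq> {}" unfolding I_def by simp
  have distrZ: "distr M (PiM I (\<lambda>_. Sp)) (\<lambda>\<omega>. \<lambda>i\<in>I. Z i \<omega>) = PiM I (\<lambda>i. distr M Sp (Z i))"
    using M.indep_vars_iff_distr_eq_PiM'[OF Ine, where M'="\<lambda>_. Sp" and X=Z] indZ Zm by simp
  define E where "E = (\<lambda>i. if i \<in> I then distr M Sp (Z i) else return Sp (0, 0))"
  have Eprob: "prob_space (E i)" for i
  proof (cases "i \<in> I")
    case True then show ?thesis unfolding E_def using M.prob_space_distr[OF Zm[OF True]] by simp
  next
    case False then show ?thesis unfolding E_def
      by (simp add: prob_space_return Sp_def space_pair_measure)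
  qed
  have setsE: "sets (E i) = sets Sp" for i unfolding E_def by simp
  have spaceE: "space (E i) = space Sp" for i using setsE[of i] by (rule sets_eq_imp_space_eq)
  have spaceSp: "space Sp = UNIV" unfolding Sp_def by (simp add: space_pair_measure)
  have PiE_eq: "PiM I (\<lambda>i. distr M Sp (Z i)) = PiM I E" by (rule PiM_cong) (auto simp: E_def)
  define hk where "hk = (\<lambda>k (p::'x \<times> 'y). (k, s (k, fst p) (snd p)))"
  have hkm': "hk k \<in> measurable (SX \<Otimes>\<^sub>M SY) Sp" for k
  proof -
    have "(\<lambda>p. (k, p)) \<in> measurable (SX \<Otimes>\<^sub>M SY) N" unfolding N_def by (rule measurable_Pair) auto
    then have "(\<lambda>p. hZ (k, p)) \<in> measurable (SX \<Otimes>\<^sub>M SY) Sp" using hZm by (rule measurable_compose)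
    moreover have "(\<lambda>p. hZ (k, p)) = hk k" by (auto simp: hZ_def hk_def fun_eq_iff case_prod_beta)
    ultimately show ?thesis by simp
  qed
  have hkm: "hk k \<in> measurable (Pk k) Sp" if k: "k \<in> {1..K}" for k
    using hkm'[of k] measurable_cong_sets[OF Pi_sets[OF k] refl, of Sp] by simp
  define Rk where "Rk = (\<lambda>k. distr (Pk k) Sp (hk k))"
  have Rprob: "prob_space (Rk k)" if k: "k \<in> {1..K}" for k
    unfolding Rk_def using prob_space.prob_space_distr[OF Pi_prob[OF k] hkm[OF k]] .
  have setsR: "sets (Rk k) = sets Sp" for k by (simp add: Rk_def)
  have spaceR: "space (Rk k) = space Sp" for k using setsR[of k] by (rule sets_eq_imp_space_eq)
  have E_calib: "E j = Rk k" if k: "k \<in> {1..K}" and j: "j \<in> G k" for k j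
  proof -
    have jI: "j \<in> I" using G_sub[OF k] j unfolding I_def by auto
    have c: "\<forall>\<omega>\<in>space M. X0 j \<omega> = k" "distr M (SX \<Otimes>\<^sub>M SY) (\<lambda>\<omega>. (X1 j \<omega>, Y j \<omega>)) = Pk k"
      using calibG[OF k j] by auto
    have XYm: "(\<lambda>\<omega>. (X1 j \<omega>, Y j \<omega>)) \<in> measurable M (SX \<Otimes>\<^sub>M SY)"
      using measurable_compose[OF Vm[OF jI, unfolded N_def] measurable_snd] by simp
    have "E j = distr M Sp (Z j)" using jI E_def by simp
    also have "\<dots> = distr M Sp (\<lambda>\<omega>. hk k (X1 j \<omega>, Y j \<omega>))"
      by (rule distr_cong) (auto simp: Z_def hZ_def hk_def c(1))
    also have "\<dots> = distr (distr M (SX \<Otimes>\<^sub>M SY) (\<lambda>\<omega>. (X1 j \<omega>, Y j \<omega>))) Sp (hk k)"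
      by (subst distr_distr[OF hkm'[of k] XYm]) (simp add: comp_def)
    also have "\<dots> = Rk k" using c(2) by (simp add: Rk_def)
    finally show ?thesis .
  qed
  have E_test: "emeasure (E (n+1)) B = (\<Sum>k\<in>{1..K}. ennreal (q k) * emeasure (Rk k) B)"
    if B: "B \<in> sets Sp" for B
  proof -
    have tI: "n+1 \<in> I" unfolding I_def by simp
    have X0m: "X0 (n+1) \<in> measurable M (count_space UNIV)"
      using measurable_compose[OF Vm[OF tI, unfolded N_def] measurable_fst] by simp
    have XYm: "(\<lambda>\<omega>. (X1 (n+1) \<omega>, Y (n+1) \<omega>)) \<in> measurable M (SX \<Otimes>\<^sub>M SY)"
      using measurable_compose[OF Vm[OF tI, unfolded N_def] measurable_snd] by simp
    define A where "A = (\<lambda>k. hk k -` B \<inter> space (SX \<Otimes>\<^sub>M SY))"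
    have Asets: "A k \<in> sets (SX \<Otimes>\<^sub>M SY)" for k unfolding A_def using hkm'[of k] B by (rule measurable_sets)
    define W where "W = (\<lambda>k. {\<omega> \<in> space M. X0 (n+1) \<omega> = k \<and> (X1 (n+1) \<omega>, Y (n+1) \<omega>) \<in> A k})"
    have Wsets: "W k \<in> sets M" for k
    proof -
      have "W k = (X0 (n+1) -` {k} \<inter> space M) \<inter> ((\<lambda>\<omega>. (X1 (n+1) \<omega>, Y (n+1) \<omega>)) -` A k \<inter> space M)"
        unfolding W_def by auto
      then show ?thesis using measurable_sets[OF X0m, of "{k}"] measurable_sets[OF XYm Asets] by auto
    qed
    have spPk: "space (Pk k) = space (SX \<Otimes>\<^sub>M SY)" if "k\<in>{1..K}" for k
      using Pi_sets[OF that] by (rule sets_eq_imp_space_eq)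
    have Wmeas: "emeasure M (W k) = ennreal (q k) * emeasure (Rk k) B" if k: "k \<in> {1..K}" for k
    proof -
      have "measure M (W k) = q k * measure (Pk k) (A k)" unfolding W_def using test[OF k Asets] .
      also have "measure (Pk k) (A k) = measure (Rk k) B"
        unfolding Rk_def A_def using measure_distr[OF hkm[OF k] B] spPk[OF k] by simp
      finally have mw: "measure M (W k) = q k * measure (Rk k) B" .
      interpret RR: prob_space "Rk k" using Rprob[OF k] .
      show ?thesis
        using mw M.emeasure_eq_measure RR.emeasure_eq_measure q_nonneg[OF k]
        by (simp add: ennreal_mult)
    qed
    define Out where "Out = {\<omega> \<in> space M. X0 (n+1) \<omega> \<notin> {1..K}}"
    have Out_eq: "Out = X0 (n+1) -` (UNIV - {1..K}) \<inter> space M" unfolding Out_def by auto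
    have Out_sets: "Out \<in> sets M" unfolding Out_eq by (rule measurable_sets[OF X0m]) simp
    define V0 where "V0 = (\<lambda>k. {\<omega>\<in>space M. X0 (n+1) \<omega> = k})"
    have V0sets: "V0 k \<in> sets M" for k
    proof -
      have "V0 k = X0 (n+1) -` {k} \<inter> space M" unfolding V0_def by auto
      then show ?thesis using measurable_sets[OF X0m, of "{k}"] by simp
    qed
    have V0meas: "measure M (V0 k) = q k" if k: "k \<in> {1..K}" for k
    proof -
      have "V0 k = {\<omega> \<in> space M. X0 (n+1) \<omega> = k \<and> (X1 (n+1) \<omega>, Y (n+1) \<omega>) \<in> space (SX \<Otimes>\<^sub>M SY)}"
        unfolding V0_def using measurable_space[OF XYm] by auto
      then have "measure M (V0 k) = q k * measure (Pk k) (space (SX \<Otimes>\<^sub>M SY))"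
        using test[OF k, of "space (SX \<Otimes>\<^sub>M SY)"] by simp
      also have "measure (Pk k) (space (SX \<Otimes>\<^sub>M SY)) = 1"
        using prob_space.prob_space[OF Pi_prob[OF k]] spPk[OF k] by simp
      finally show ?thesis by simp
    qed
    have "measure M (space M - Out) = measure M (\<Union>k\<in>{1..K}. V0 k)"
      unfolding Out_def V0_def by (rule arg_cong[where f="measure M"]) auto
    also have "\<dots> = (\<Sum>k\<in>{1..K}. measure M (V0 k))"
    proof (rule M.finite_measure_finite_Union)
      show "V0 ` {1..K} \<subseteq> M.events" using V0sets by auto
      show "disjoint_family_on V0 {1..K}" by (auto simp: disjoint_family_on_def V0_def)
    qed simp
    also have "\<dots> = 1" using V0meas q_sum by simp
    finally have "measure M Out = 0" using M.prob_compl[OF Out_sets] by simp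
    then have Out_null: "Out \<in> null_sets M"
      using Out_sets M.emeasure_eq_measure by (intro null_setsI) auto
    have ZB: "Z (n+1) -` B \<inter> space M \<in> sets M" using measurable_sets[OF Zm[OF tI] B] .
    have null2: "Out \<inter> (Z (n+1) -` B \<inter> space M) \<in> null_sets M"
      by (rule null_sets_subset[OF Out_null]) (use Out_sets ZB in auto)
    have decomp: "Z (n+1) -` B \<inter> space M = (\<Union>k\<in>{1..K}. W k) \<union> (Out \<inter> (Z (n+1) -` B \<inter> space M))"
      using measurable_space[OF XYm]
      by (auto simp: W_def Out_def A_def Z_def hZ_def hk_def)
    have "emeasure (E (n+1)) B = emeasure M (Z (n+1) -` B \<inter> space M)"
      using tI emeasure_distr[OF Zm[OF tI] B] by (simp add: E_def)
    also have "\<dots> = emeasure M ((\<Union>k\<in>{1..K}. W k) \<union> (Out \<inter> (Z (n+1) -` B \<inter> space M)))"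
      by (rule arg_cong[where f="emeasure M", OF decomp])
    also have "\<dots> = emeasure M (\<Union>k\<in>{1..K}. W k)"
      by (rule emeasure_Un_null_set) (use Wsets null2 in auto)
    also have "\<dots> = (\<Sum>k\<in>{1..K}. emeasure M (W k))"
    proof (rule sum_emeasure[symmetric])
      show "W ` {1..K} \<subseteq> sets M" using Wsets by auto
      show "disjoint_family_on W {1..K}" by (auto simp: disjoint_family_on_def W_def)
    qed simp
    also have "\<dots> = (\<Sum>k\<in>{1..K}. ennreal (q k) * emeasure (Rk k) B)"
      using Wmeas by (intro sum.cong) auto
    finally show ?thesis .
  qed
  define Cov where "Cov = {v \<in> space (PiM I (\<lambda>_. Sp)). cov (\<lambda>i. snd (v i)) (snd (v (n+1)))}"
  have Cov_sets: "Cov \<in> sets (PiM I (\<lambda>_. Sp))"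
  proof -
    have "Measurable.pred (PiM I (\<lambda>_. Sp)) (\<lambda>v. cov (\<lambda>i. snd (v i)) (snd (v (n+1))))"
    proof (rule cov_measurable)
      fix i assume "i \<in> {1..n}"
      then have "i \<in> I" unfolding I_def by auto
      then have "(\<lambda>v. v i) \<in> measurable (PiM I (\<lambda>_. Sp)) Sp" by (rule measurable_component_singleton)
      then show "(\<lambda>v. snd (v i)) \<in> borel_measurable (PiM I (\<lambda>_. Sp))"
        unfolding Sp_def by (rule measurable_compose[OF _ measurable_snd])
    next
      have "n + 1 \<in> I" unfolding I_def by auto
      then have "(\<lambda>v. v (n+1)) \<in> measurable (PiM I (\<lambda>_. Sp)) Sp" by (rule measurable_component_singleton)
      then show "(\<lambda>v. snd (v (n+1))) \<in> borel_measurable (PiM I (\<lambda>_. Sp))"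
        unfolding Sp_def by (rule measurable_compose[OF _ measurable_snd])
    qed
    then show ?thesis unfolding Cov_def pred_def .
  qed
  have Zvm: "(\<lambda>\<omega>. \<lambda>i\<in>I. Z i \<omega>) \<in> measurable M (PiM I (\<lambda>_. Sp))"
    using Zm by (intro measurable_restrict) auto
  define m where "m = Max (insert 0 {q k / real (nn k) | k. k \<in> {1..K} \<and> nn k > 0})"
  have main: "ennreal (1 - \<alpha> - m) \<le> emeasure (PiM I E) Cov"
  proof -
    have finS: "finite {q k / real (nn k) | k. k \<in> {1..K} \<and> nn k > 0}"
      by (rule finite_subset[of _ "(\<lambda>k. q k / real (nn k)) ` {1..K}"]) auto
    have m0: "0 \<le> m" unfolding m_def using finS by (intro Max_ge) auto
    have mk: "q k / real (nn k) \<le> m" if "k \<in> {1..K}" "nn k > 0" for k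
      unfolding m_def using finS that by (intro Max_ge) auto
    have sfE: "\<And>i. sigma_finite_measure (E i)" using Eprob by (rule prob_space_imp_sigma_finite)
    interpret PS: product_sigma_finite E using sfE by (rule product_sigma_finite.intro)
    define C where "C = PiM {1..n} E"
    interpret C: prob_space C unfolding C_def using Eprob by (intro prob_space_PiM) auto
    have Iins: "I = insert (n+1) {1..n}" unfolding I_def by auto
    have setsPI: "sets (PiM I E) = sets (PiM I (\<lambda>_. Sp))" by (rule sets_PiM_cong) (auto simp: setsE)
    have Cov_sets': "Cov \<in> sets (PiM I E)" using Cov_sets setsPI by simp
    have spaceC: "space C = PiE {1..n} (\<lambda>_. UNIV)" unfolding C_def by (simp add: space_PiM spaceE spaceSp)
    define f where "f = (\<lambda>(x::nat \<Rightarrow> nat \<times> real) (y::nat \<times> real).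
        if cov (\<lambda>i. snd (x i)) (snd y) then 1 else (0::ennreal))"
    define fj where "fj = (\<lambda>j (x::nat \<Rightarrow> nat \<times> real) (y::nat \<times> real).
        if cov ((\<lambda>i. snd (x i))(j := snd y)) (snd (x j)) then 1 else (0::ennreal))"
    have fj_eq: "f (x(j:=y)) (x j) = fj j x y" for j x y
    proof -
      have "(\<lambda>i. snd ((x(j := y)) i)) = (\<lambda>i. snd (x i))(j := snd y)" by (auto simp: fun_eq_iff)
      then show ?thesis by (simp add: f_def fj_def)
    qed
    have ifm: "(\<lambda>\<omega>. if cov (a \<omega>) (b \<omega>) then 1 else (0::ennreal)) \<in> borel_measurable N'"
      if "\<And>i. i\<in>{1..n} \<Longrightarrow> (\<lambda>\<omega>. a \<omega> i) \<in> borel_measurable N'" "b \<in> borel_measurable N'"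
      for N' :: "((nat \<Rightarrow> nat \<times> real) \<times> (nat \<times> real)) measure" and a b
    proof -
      have P: "Measurable.pred N' (\<lambda>\<omega>. cov (a \<omega>) (b \<omega>))" by (rule cov_measurable[OF that])
      show ?thesis
      proof (rule measurable_If)
        show "(\<lambda>\<omega>. 1::ennreal) \<in> borel_measurable N'" by simp
        show "(\<lambda>\<omega>. 0::ennreal) \<in> borel_measurable N'" by simp
        show "{\<omega> \<in> space N'. cov (a \<omega>) (b \<omega>)} \<in> sets N'" using P unfolding pred_def .
      qed
    qed
    have sndSp: "snd \<in> measurable Sp borel" unfolding Sp_def by (rule measurable_snd)
    have compm: "(\<lambda>x. snd (x i)) \<in> borel_measurable C" if "i \<in> {1..n}" for i
    proof -
      have "(\<lambda>x. x i) \<in> measurable C (E i)" unfolding C_def using that by (rule measurable_component_singleton)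
      then have "(\<lambda>x. x i) \<in> measurable C Sp" by (subst (asm) measurable_cong_sets[OF refl setsE[of i]])
      then show ?thesis using sndSp by (rule measurable_compose)
    qed
    have sndR: "snd \<in> borel_measurable (Rk k)" for k
      by (subst measurable_cong_sets[OF setsR[of k] refl]) (rule sndSp)
    have fm: "(\<lambda>(x, y). f x y) \<in> borel_measurable (C \<Otimes>\<^sub>M Rk k)" for k
    proof -
      have "(\<lambda>(x, y). f x y) = (\<lambda>p. if cov (\<lambda>i. snd (fst p i)) (snd (snd p)) then 1 else (0::ennreal))"
        by (auto simp: f_def fun_eq_iff)
      also have "\<dots> \<in> borel_measurable (C \<Otimes>\<^sub>M Rk k)"
      proof (rule ifm)
        fix i assume "i \<in> {1..n}"
        then show "(\<lambda>p. snd (fst p i)) \<in> borel_measurable (C \<Otimes>\<^sub>M Rk k)"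
          by (rule measurable_compose[OF measurable_fst compm])
      next
        show "(\<lambda>p. snd (snd p)) \<in> borel_measurable (C \<Otimes>\<^sub>M Rk k)"
          by (rule measurable_compose[OF measurable_snd sndR])
      qed
      finally show ?thesis .
    qed
    have fjm: "(\<lambda>(x, y). fj j x y) \<in> borel_measurable (C \<Otimes>\<^sub>M Rk k)" if j: "j \<in> {1..n}" for j k
    proof -
      have "(\<lambda>(x, y). fj j x y) = (\<lambda>p. if cov (\<lambda>i. if i = j then snd (snd p) else snd (fst p i)) (snd (fst p j))
          then 1 else (0::ennreal))"
        by (simp add: fun_eq_iff fj_def fun_upd_def split_beta)
      also have "\<dots> \<in> borel_measurable (C \<Otimes>\<^sub>M Rk k)"
      proof (rule ifm)
        fix i assume i: "i \<in> {1..n}"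
        show "(\<lambda>p. if i = j then snd (snd p) else snd (fst p i)) \<in> borel_measurable (C \<Otimes>\<^sub>M Rk k)"
        proof (cases "i = j")
          case True
          have "(\<lambda>p. snd (snd p)) \<in> borel_measurable (C \<Otimes>\<^sub>M Rk k)"
            by (rule measurable_compose[OF measurable_snd sndR])
          then show ?thesis using True by simp
        next
          case False
          have "(\<lambda>p. snd (fst p i)) \<in> borel_measurable (C \<Otimes>\<^sub>M Rk k)"
            by (rule measurable_compose[OF measurable_fst compm[OF i]])
          then show ?thesis using False by simp
        qed
      next
        show "(\<lambda>p. snd (fst p j)) \<in> borel_measurable (C \<Otimes>\<^sub>M Rk k)"
          by (rule measurable_compose[OF measurable_fst compm[OF j]])
      qed
      finally show ?thesis .
    qed
    have gm: "(\<lambda>x. \<integral>\<^sup>+y. f x y \<partial>Rk k) \<in> borel_measurable C" if k: "k \<in> {1..K}" for k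
    proof -
      interpret RK: prob_space "Rk k" using Rprob[OF k] .
      show ?thesis using RK.borel_measurable_nn_integral[OF fm[of k]] .
    qed
    have gjm: "(\<lambda>x. \<integral>\<^sup>+y. fj j x y \<partial>Rk k) \<in> borel_measurable C" if k: "k \<in> {1..K}" and j: "j \<in> {1..n}" for k j
    proof -
      interpret RK: prob_space "Rk k" using Rprob[OF k] .
      show ?thesis using RK.borel_measurable_nn_integral[OF fjm[OF j, of k]] .
    qed
    have s1: "emeasure (PiM I E) Cov = (\<integral>\<^sup>+x. \<integral>\<^sup>+y. indicator Cov (x(n+1 := y)) \<partial>E (n+1) \<partial>C)"
    proof -
      have "emeasure (PiM I E) Cov = (\<integral>\<^sup>+v. indicator Cov v \<partial>PiM I E)" using Cov_sets' by simp
      also have "\<dots> = (\<integral>\<^sup>+x. \<integral>\<^sup>+y. indicator Cov (x(n+1 := y)) \<partial>E (n+1) \<partial>C)"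
        unfolding C_def Iins
        by (rule PS.product_nn_integral_insert) (use Cov_sets' Iins in auto)
      finally show ?thesis .
    qed
    have s2: "(\<integral>\<^sup>+y. indicator Cov (x(n+1 := y)) \<partial>E (n+1)) = (\<Sum>k\<in>{1..K}. ennreal (q k) * \<integral>\<^sup>+y. f x y \<partial>Rk k)"
      if x: "x \<in> space C" for x
    proof -
      define Bx where "Bx = {y \<in> space Sp. cov (\<lambda>i. snd (x i)) (snd y)}"
      have Bxs: "Bx \<in> sets Sp"
      proof -
        have "Measurable.pred Sp (\<lambda>y. cov (\<lambda>i. snd (x i)) (snd y))"
          by (rule cov_measurable) (use sndSp in auto)
        then show ?thesis unfolding Bx_def pred_def .
      qed
      have xe: "x \<in> extensional {1..n}" using x spaceC by (simp add: PiE_iff)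
      have ind: "indicator Cov (x(n+1 := y)) = indicator Bx y" for y
      proof -
        have sp: "x(n+1 := y) \<in> space (PiM I (\<lambda>_. Sp))"
          using xe by (auto simp: space_PiM spaceSp I_def PiE_iff extensional_def)
        have "Tq (\<lambda>i. snd ((x(n+1 := y)) i)) = Tq (\<lambda>i. snd (x i))" by (rule Tq_cong) auto
        then have "x(n+1 := y) \<in> Cov \<longleftrightarrow> y \<in> Bx"
          using sp unfolding Cov_def Bx_def cov_def by (simp add: spaceSp)
        then show ?thesis by (simp add: indicator_def)
      qed
      have "(\<integral>\<^sup>+y. indicator Cov (x(n+1 := y)) \<partial>E (n+1)) = (\<integral>\<^sup>+y. indicator Bx y \<partial>E (n+1))"
        by (intro nn_integral_cong ind)
      also have "\<dots> = emeasure (E (n+1)) Bx" using Bxs setsE by simp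
      also have "\<dots> = (\<Sum>k\<in>{1..K}. ennreal (q k) * emeasure (Rk k) Bx)" by (rule E_test[OF Bxs])
      also have "\<dots> = (\<Sum>k\<in>{1..K}. ennreal (q k) * \<integral>\<^sup>+y. f x y \<partial>Rk k)"
      proof (rule sum.cong[OF refl])
        fix k
        have "emeasure (Rk k) Bx = (\<integral>\<^sup>+y. indicator Bx y \<partial>Rk k)" using Bxs setsR by simp
        also have "\<dots> = (\<integral>\<^sup>+y. f x y \<partial>Rk k)"
          by (rule nn_integral_cong) (simp add: Bx_def f_def indicator_def spaceSp)
        finally show "ennreal (q k) * emeasure (Rk k) Bx = ennreal (q k) * \<integral>\<^sup>+y. f x y \<partial>Rk k" by simp
      qed
      finally show ?thesis .
    qed
    have s3: "(\<integral>\<^sup>+x. \<integral>\<^sup>+y. indicator Cov (x(n+1 := y)) \<partial>E (n+1) \<partial>C) =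
        (\<Sum>k\<in>{1..K}. ennreal (q k) * \<integral>\<^sup>+x. \<integral>\<^sup>+y. f x y \<partial>Rk k \<partial>C)"
    proof -
      have "(\<integral>\<^sup>+x. \<integral>\<^sup>+y. indicator Cov (x(n+1 := y)) \<partial>E (n+1) \<partial>C) =
          (\<integral>\<^sup>+x. (\<Sum>k\<in>{1..K}. ennreal (q k) * \<integral>\<^sup>+y. f x y \<partial>Rk k) \<partial>C)"
        by (rule nn_integral_cong) (rule s2)
      also have "\<dots> = (\<Sum>k\<in>{1..K}. \<integral>\<^sup>+x. ennreal (q k) * \<integral>\<^sup>+y. f x y \<partial>Rk k \<partial>C)"
        by (rule nn_integral_sum) (use gm in auto)
      also have "\<dots> = (\<Sum>k\<in>{1..K}. ennreal (q k) * \<integral>\<^sup>+x. \<integral>\<^sup>+y. f x y \<partial>Rk k \<partial>C)"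
        by (rule sum.cong[OF refl]) (rule nn_integral_cmult[OF gm], simp)
      finally show ?thesis .
    qed
    have s4: "ennreal (q k) * (\<integral>\<^sup>+x. \<integral>\<^sup>+y. f x y \<partial>Rk k \<partial>C) =
        (\<Sum>j\<in>G k. ennreal (q k / real (nn k)) * \<integral>\<^sup>+x. \<integral>\<^sup>+y. fj j x y \<partial>Rk k \<partial>C)"
      if k: "k \<in> {1..K}" and nk: "nn k > 0" for k
    proof -
      have sw: "(\<integral>\<^sup>+x. \<integral>\<^sup>+y. f x y \<partial>Rk k \<partial>C) = (\<integral>\<^sup>+x. \<integral>\<^sup>+y. fj j x y \<partial>Rk k \<partial>C)" if j: "j \<in> G k" for j
      proof -
        have jn: "j \<in> {1..n}" using G_sub[OF k] j by auto
        have "(\<integral>\<^sup>+x. \<integral>\<^sup>+y. (\<lambda>(x, y). f x y) (x, y) \<partial>Rk k \<partial>PiM {1..n} E) =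
            (\<integral>\<^sup>+x. \<integral>\<^sup>+y. (\<lambda>(x, y). f x y) (x(j := y), x j) \<partial>Rk k \<partial>PiM {1..n} E)"
          by (rule swap_lemma[where E=E and J="{1..n}" and j=j and R="Rk k" and h="\<lambda>(x, y). f x y",
                OF Eprob finite_atLeastAtMost jn E_calib[OF k j]]) (use fm[of k] in \<open>simp add: C_def\<close>)
        then show ?thesis by (simp add: C_def fj_eq)
      qed
      have "(\<Sum>j\<in>G k. ennreal (q k / real (nn k)) * \<integral>\<^sup>+x. \<integral>\<^sup>+y. fj j x y \<partial>Rk k \<partial>C) =
          (\<Sum>j\<in>G k. ennreal (q k / real (nn k)) * \<integral>\<^sup>+x. \<integral>\<^sup>+y. f x y \<partial>Rk k \<partial>C)"
        using sw by simp
      also have "\<dots> = of_nat (card (G k)) * (ennreal (q k / real (nn k)) * \<integral>\<^sup>+x. \<integral>\<^sup>+y. f x y \<partial>Rk k \<partial>C)"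
        by simp
      also have "of_nat (card (G k)) * ennreal (q k / real (nn k)) = ennreal (q k)"
      proof -
        have "of_nat (card (G k)) * ennreal (q k / real (nn k)) = ennreal (real (nn k)) * ennreal (q k / real (nn k))"
          using G_card[OF k] by (simp add: ennreal_of_nat_eq_real_of_nat)
        also have "\<dots> = ennreal (real (nn k) * (q k / real (nn k)))"
          by (rule ennreal_mult[symmetric]) (use q_nonneg[OF k] in auto)
        also have "real (nn k) * (q k / real (nn k)) = q k" using nk by simp
        finally show ?thesis .
      qed
      then have "of_nat (card (G k)) * (ennreal (q k / real (nn k)) * \<integral>\<^sup>+x. \<integral>\<^sup>+y. f x y \<partial>Rk k \<partial>C) =
          ennreal (q k) * \<integral>\<^sup>+x. \<integral>\<^sup>+y. f x y \<partial>Rk k \<partial>C"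
        by (simp add: mult.assoc[symmetric])
      finally show ?thesis by simp
    qed
    define Tm where "Tm = (\<lambda>k x. if nn k = 0 then ennreal (q k) * (\<integral>\<^sup>+y. f x y \<partial>Rk k)
        else (\<Sum>j\<in>G k. ennreal (q k / real (nn k)) * \<integral>\<^sup>+y. fj j x y \<partial>Rk k))"
    have Tmm: "Tm k \<in> borel_measurable C" if k: "k \<in> {1..K}" for k
    proof (cases "nn k = 0")
      case True then show ?thesis unfolding Tm_def using gm[OF k] by simp
    next
      case False
      have "(\<lambda>x. \<Sum>j\<in>G k. ennreal (q k / real (nn k)) * \<integral>\<^sup>+y. fj j x y \<partial>Rk k) \<in> borel_measurable C"
        using G_sub[OF k] by (intro borel_measurable_sum borel_measurable_times_ennreal measurable_const gjm[OF k]) auto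
      then show ?thesis unfolding Tm_def using False by simp
    qed
    have intTm: "(\<integral>\<^sup>+x. Tm k x \<partial>C) = (if nn k = 0 then ennreal (q k) * (\<integral>\<^sup>+x. \<integral>\<^sup>+y. f x y \<partial>Rk k \<partial>C)
        else (\<Sum>j\<in>G k. ennreal (q k / real (nn k)) * \<integral>\<^sup>+x. \<integral>\<^sup>+y. fj j x y \<partial>Rk k \<partial>C))"
      if k: "k \<in> {1..K}" for k
    proof (cases "nn k = 0")
      case True then show ?thesis unfolding Tm_def using nn_integral_cmult[OF gm[OF k]] by simp
    next
      case False
      have "(\<integral>\<^sup>+x. (\<Sum>j\<in>G k. ennreal (q k / real (nn k)) * \<integral>\<^sup>+y. fj j x y \<partial>Rk k) \<partial>C) =
          (\<Sum>j\<in>G k. \<integral>\<^sup>+x. ennreal (q k / real (nn k)) * \<integral>\<^sup>+y. fj j x y \<partial>Rk k \<partial>C)"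
        using G_sub[OF k] by (intro nn_integral_sum borel_measurable_times_ennreal measurable_const gjm[OF k]) auto
      also have "\<dots> = (\<Sum>j\<in>G k. ennreal (q k / real (nn k)) * \<integral>\<^sup>+x. \<integral>\<^sup>+y. fj j x y \<partial>Rk k \<partial>C)"
        using G_sub[OF k] by (intro sum.cong refl nn_integral_cmult gjm[OF k]) auto
      finally show ?thesis unfolding Tm_def using False by simp
    qed
    have s5: "(\<Sum>k\<in>{1..K}. ennreal (q k) * \<integral>\<^sup>+x. \<integral>\<^sup>+y. f x y \<partial>Rk k \<partial>C) = (\<integral>\<^sup>+x. (\<Sum>k\<in>{1..K}. Tm k x) \<partial>C)"
    proof -
      have "(\<integral>\<^sup>+x. (\<Sum>k\<in>{1..K}. Tm k x) \<partial>C) = (\<Sum>k\<in>{1..K}. \<integral>\<^sup>+x. Tm k x \<partial>C)"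
        by (rule nn_integral_sum) (use Tmm in auto)
      also have "\<dots> = (\<Sum>k\<in>{1..K}. ennreal (q k) * \<integral>\<^sup>+x. \<integral>\<^sup>+y. f x y \<partial>Rk k \<partial>C)"
        by (rule sum.cong[OF refl]) (simp add: intTm s4)
      finally show ?thesis by simp
    qed
    have s6: "ennreal (1 - \<alpha> - m) \<le> (\<Sum>k\<in>{1..K}. Tm k x)" if x: "x \<in> space C" for x
    proof -
      define c where "c = (\<lambda>i. snd (x i))"
      define rt where "rt = (\<lambda>k. if nn k = 0 then q k * (if Tq c = \<infinity> then 1 else 0)
            else (\<Sum>j\<in>G k. q k / real (nn k) * ell c k j))"
      have rt0: "0 \<le> rt k" if k: "k \<in> {1..K}" for k
        unfolding rt_def using q_nonneg[OF k] ell_nonneg by (auto intro!: sum_nonneg)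
      have Tge: "ennreal (rt k) \<le> Tm k x" if k: "k \<in> {1..K}" for k
      proof -
        interpret RK: prob_space "Rk k" using Rprob[OF k] .
        show ?thesis
        proof (cases "nn k = 0")
          case True
          show ?thesis
          proof (cases "Tq c = \<infinity>")
            case inf: True
            have "\<And>y. f x y = 1" unfolding f_def using inf by (simp add: cov_def c_def)
            then have "(\<integral>\<^sup>+y. f x y \<partial>Rk k) = 1" by (simp add: RK.emeasure_space_1)
            then show ?thesis unfolding Tm_def rt_def using True inf by simp
          next
            case False
            then show ?thesis unfolding rt_def using True by simp
          qed
        next
          case nz: False
          have each: "ennreal (q k / real (nn k) * ell c k j) \<le> ennreal (q k / real (nn k)) * \<integral>\<^sup>+y. fj j x y \<partial>Rk k"
            if j: "j \<in> G k" for j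
          proof -
            have pw: "ennreal (ell c k j) \<le> fj j x y" for y
            proof -
              have "ell c k j \<le> (if cov (c(j := snd y)) (c j) then 1 else 0)"
                using ell_le[OF k nz[unfolded neq0_conv] j] .
              then show ?thesis unfolding fj_def c_def by (auto simp: ell_def split: if_splits)
            qed
            have "ennreal (ell c k j) = (\<integral>\<^sup>+y. ennreal (ell c k j) \<partial>Rk k)" by (simp add: RK.emeasure_space_1)
            also have "\<dots> \<le> (\<integral>\<^sup>+y. fj j x y \<partial>Rk k)" by (rule nn_integral_mono) (rule pw)
            finally have "ennreal (ell c k j) \<le> (\<integral>\<^sup>+y. fj j x y \<partial>Rk k)" .
            then have "ennreal (q k / real (nn k)) * ennreal (ell c k j) \<le> ennreal (q k / real (nn k)) * \<integral>\<^sup>+y. fj j x y \<partial>Rk k"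
              by (rule mult_left_mono) simp
            moreover have "ennreal (q k / real (nn k)) * ennreal (ell c k j) = ennreal (q k / real (nn k) * ell c k j)"
              by (rule ennreal_mult[symmetric]) (use q_nonneg[OF k] ell_nonneg[of c k j] in auto)
            ultimately show ?thesis by simp
          qed
          have "ennreal (rt k) = (\<Sum>j\<in>G k. ennreal (q k / real (nn k) * ell c k j))"
            unfolding rt_def using nz q_nonneg[OF k] ell_nonneg by (simp add: sum_ennreal)
          also have "\<dots> \<le> (\<Sum>j\<in>G k. ennreal (q k / real (nn k)) * \<integral>\<^sup>+y. fj j x y \<partial>Rk k)"
            by (rule sum_mono) (rule each)
          also have "\<dots> = Tm k x" unfolding Tm_def using nz by simp
          finally show ?thesis .
        qed
      qed
      have "ennreal (1 - \<alpha> - m) \<le> ennreal (\<Sum>k\<in>{1..K}. rt k)"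
        unfolding rt_def using combine[OF m0 mk, of c] by (intro ennreal_leI) auto
      also have "\<dots> = (\<Sum>k\<in>{1..K}. ennreal (rt k))" by (rule sum_ennreal[symmetric]) (use rt0 in auto)
      also have "\<dots> \<le> (\<Sum>k\<in>{1..K}. Tm k x)" by (rule sum_mono) (rule Tge)
      finally show ?thesis .
    qed
    have "ennreal (1 - \<alpha> - m) = (\<integral>\<^sup>+x. ennreal (1 - \<alpha> - m) \<partial>C)" by (simp add: C.emeasure_space_1)
    also have "\<dots> \<le> (\<integral>\<^sup>+x. (\<Sum>k\<in>{1..K}. Tm k x) \<partial>C)" by (rule nn_integral_mono) (rule s6)
    also have "\<dots> = emeasure (PiM I E) Cov" using s1 s3 s5 by simp
    finally show ?thesis .
  qed
  have event: "{\<omega> \<in> space M.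
            Y (n+1) \<omega> \<in> gwcp_set s K q \<alpha> (map (\<lambda>i. (X0 i \<omega>, X1 i \<omega>, Y i \<omega>)) [1..<n+1])
                           (X0 (n+1) \<omega>, X1 (n+1) \<omega>)} = (\<lambda>\<omega>. \<lambda>i\<in>I. Z i \<omega>) -` Cov \<inter> space M"
  proof -
    have eq: "Y (n+1) \<omega> \<in> gwcp_set s K q \<alpha> (map (\<lambda>i. (X0 i \<omega>, X1 i \<omega>, Y i \<omega>)) [1..<n+1])
                           (X0 (n+1) \<omega>, X1 (n+1) \<omega>) \<longleftrightarrow> (\<lambda>i\<in>I. Z i \<omega>) \<in> Cov"
      if w: "\<omega> \<in> space M" for \<omega>
    proof -
      define c where "c = (\<lambda>i. s (X0 i \<omega>, X1 i \<omega>) (Y i \<omega>))"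
      have gs: "group_scores s (map (\<lambda>i. (X0 i \<omega>, X1 i \<omega>, Y i \<omega>)) [1..<n+1]) k =
          map (\<lambda>i. ereal (c i)) (filter (\<lambda>i. i \<in> G k) [1..<n+1])" if k: "k \<in> {1..K}" for k
      proof -
        have "filter (\<lambda>i. X0 i \<omega> = k) [1..<n+1] = filter (\<lambda>i. i \<in> G k) [1..<n+1]"
        proof (rule filter_cong[OF refl])
          fix i assume "i \<in> set [1..<n+1]"
          then have "i \<in> {1..n}" by auto
          then show "(X0 i \<omega> = k) = (i \<in> G k)" using X0G w k by blast
        qed
        then show ?thesis by (simp add: group_scores_map c_def)
      qed
      have len: "length (filter (\<lambda>i. i \<in> G k) [1..<n+1]) = nn k" if k: "k \<in> {1..K}" for k
      proof -
        have "length (filter (\<lambda>i. i \<in> G k) [1..<n+1]) = card ({i. i \<in> G k} \<inter> set [1..<n+1])"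
          by (rule distinct_length_filter) simp
        also have "{i. i \<in> G k} \<inter> set [1..<n+1] = G k" using G_sub[OF k] by auto
        finally show ?thesis using G_card[OF k] by simp
      qed
      have cntl: "length (filter (\<lambda>x. x \<in> {..t}) (map (\<lambda>i. ereal (c i)) (filter (\<lambda>i. i \<in> G k) [1..<n+1])))
          = cnt (G k) c t" if k: "k \<in> {1..K}" for k t
      proof -
        have "length (filter (\<lambda>x. x \<in> {..t}) (map (\<lambda>i. ereal (c i)) (filter (\<lambda>i. i \<in> G k) [1..<n+1])))
            = length (filter (\<lambda>i. i \<in> G k \<and> ereal (c i) \<le> t) [1..<n+1])"
          by (simp add: filter_map comp_def filter_filter conj_commute)
        also have "\<dots> = card ({i. i \<in> G k \<and> ereal (c i) \<le> t} \<inter> set [1..<n+1])"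
          by (rule distinct_length_filter) simp
        also have "{i. i \<in> G k \<and> ereal (c i) \<le> t} \<inter> set [1..<n+1] = {i \<in> G k. ereal (c i) \<le> t}"
          using G_sub[OF k] by auto
        finally show ?thesis unfolding cnt_def .
      qed
      have pr: "measure_pmf.prob (emp_score (group_scores s (map (\<lambda>i. (X0 i \<omega>, X1 i \<omega>, Y i \<omega>)) [1..<n+1]) k)) {..t}
          = phi k c t" if k: "k \<in> {1..K}" for k t
      proof (cases "nn k = 0")
        case True
        then have "filter (\<lambda>i. i \<in> G k) [1..<n+1] = []" using len[OF k] by simp
        then show ?thesis using True unfolding gs[OF k] emp_score_def phi_def by (auto simp: indicator_def)
      next
        case False
        then have "filter (\<lambda>i. i \<in> G k) [1..<n+1] \<noteq> []" using len[OF k] by (metis length_0_conv)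
        then have ne: "map (\<lambda>i. ereal (c i)) (filter (\<lambda>i. i \<in> G k) [1..<n+1]) \<noteq> []" by (metis Nil_is_map_conv)
        let ?L = "map (\<lambda>i. ereal (c i)) (filter (\<lambda>i. i \<in> G k) [1..<n+1])"
        have e1: "emp_score ?L = pmf_of_multiset (mset ?L)" unfolding emp_score_def using ne by (rule if_not_P)
        have e2: "measure_pmf.prob (emp_score ?L) {..t} = real (length (filter (\<lambda>x. x \<in> {..t}) ?L)) / real (length ?L)"
          unfolding e1 by (rule prob_pmf_of_mset_list[OF ne])
        have e3: "length ?L = nn k" using len[OF k] by (simp only: length_map)
        show ?thesis unfolding gs[OF k] e2 e3 cntl[OF k] phi_def using False by simp
      qed
      have "(\<Sum>k\<in>{1..K}. q k * measure_pmf.prob (emp_score (group_scores s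
              (map (\<lambda>i. (X0 i \<omega>, X1 i \<omega>, Y i \<omega>)) [1..<n+1]) k)) {..t}) = Fc c t" for t
        unfolding Fc_def
      proof (rule sum.cong[OF refl])
        fix k assume "k \<in> {1..K}"
        from pr[OF this, of t] show "q k * measure_pmf.prob (emp_score (group_scores s
              (map (\<lambda>i. (X0 i \<omega>, X1 i \<omega>, Y i \<omega>)) [1..<n+1]) k)) {..t} = q k * phi k c t"
          by (rule arg_cong)
      qed
      then have qh: "gwcp_qhat s K q \<alpha> (map (\<lambda>i. (X0 i \<omega>, X1 i \<omega>, Y i \<omega>)) [1..<n+1]) = Tq c"
        unfolding gwcp_qhat_def quantile_def Tq_def by simp
      have L: "Y (n+1) \<omega> \<in> gwcp_set s K q \<alpha> (map (\<lambda>i. (X0 i \<omega>, X1 i \<omega>, Y i \<omega>)) [1..<n+1])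
                           (X0 (n+1) \<omega>, X1 (n+1) \<omega>) \<longleftrightarrow> cov c (c (n+1))"
        unfolding gwcp_set_def cov_def qh c_def by simp
      have sp: "(\<lambda>i\<in>I. Z i \<omega>) \<in> space (PiM I (\<lambda>_. Sp))" using measurable_space[OF Zvm w] .
      have tq: "Tq (\<lambda>i. snd ((\<lambda>i\<in>I. Z i \<omega>) i)) = Tq c"
        by (rule Tq_cong) (auto simp: I_def Z_def hZ_def c_def)
      have "(\<lambda>i\<in>I. Z i \<omega>) \<in> Cov \<longleftrightarrow> cov c (c (n+1))"
        using sp tq unfolding Cov_def cov_def by (simp add: I_def Z_def hZ_def c_def)
      with L show ?thesis by simp
    qed
    then show ?thesis by auto
  qed
  have "emeasure M ((\<lambda>\<omega>. \<lambda>i\<in>I. Z i \<omega>) -` Cov \<inter> space M) = emeasure (PiM I E) Cov"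
    using emeasure_distr[OF Zvm Cov_sets] distrZ PiE_eq by simp
  then have "ennreal (1 - \<alpha> - m) \<le> ennreal (measure M ((\<lambda>\<omega>. \<lambda>i\<in>I. Z i \<omega>) -` Cov \<inter> space M))"
    using main M.emeasure_eq_measure by simp
  then have "1 - \<alpha> - m \<le> measure M ((\<lambda>\<omega>. \<lambda>i\<in>I. Z i \<omega>) -` Cov \<inter> space M)"
    by (cases "1 - \<alpha> - m \<ge> 0") (auto simp: ennreal_le_iff)
  then show ?thesis unfolding event m_def by simp
qed

end
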